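(* Let $d\ge2$ and let the copula of a random vector $\boldsymbol Z\in\mathbb{R}^d$ be an Archimedean copula $C^\phi$ with generator $\phi$. Suppose $\phi^{\leftarrow}$ is $d$ times continuously differentiable and $(-D)^j\phi^{\leftarrow}(0)<\infty$ for all $j\in\{1,\dots,d\}$, where $D$ denotes differentiation. Then $\boldsymbol Z$ is both pairwise and mutually asymptotically independent.
   Context: An Archimedean copula is $C^\phi(u_1,\dots,u_d)=\phi^{\leftarrow}(\phi(u_1)+\dots+\phi(u_d))$, $u_j\in[0,1]$, where $\phi:[0,1]\to[0,\infty]$ is convex, decreasing, $\phi(1)=0$, such that $C^\phi$ is a copula, and $\phi^{\leftarrow}(y)=\inf\{u\in[0,1]:\phi(u)\le y\}$. The survival copula $\widehat C$ of $\boldsymbol Z$ is the copula with $\P(Z_1>z_1,\dots,Z_d>z_d)=\widehat C(\overline F_1(z_1),\dots,\overline F_d(z_d))$, $\overline F_j$ the marginal tail functions; $\widehat C_S$ is $\widehat C$ with arguments outside $S$ set to $1$ ($\widehat C_S(u)=u$ if $|S|=1$). Pairwise asymptotic independence: $\widehat C_{\{j,\ell\}}(u,u)=o(u)$ as $u\downarrow0$ for all distinct $j,\ell$. Mutual asymptotic independence: for all $S\subseteq\{1,\dots,d\}$ with $|S|\ge2$ and all $\ell\in S$, $\lim_{u\downarrow0}\widehat C_S(u,\dots,u)/\widehat C_{S\setminus\{\ell\}}(u,\dots,u)=0$ (with $0/0:=0$). *)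

theory Defs
  imports "HOL-Analysis.Analysis" "HOL-Library.Extended_Nonnegative_Real" "HOL-Library.Landau_Symbols"
begin

text \<open>Vectors in [0,1]^d are represented as functions nat => real; only the
coordinates 0..d-1 matter.\<close>

definition is_copula :: "nat \<Rightarrow> ((nat \<Rightarrow> real) \<Rightarrow> real) \<Rightarrow> bool" where
  "is_copula d C \<longleftrightarrow>
     (\<forall>u. (\<forall>j<d. 0 \<le> u j \<and> u j \<le> 1) \<longrightarrow> 0 \<le> C u \<and> C u \<le> 1) \<and>
     (\<forall>u. (\<forall>j<d. 0 \<le> u j \<and> u j \<le> 1) \<and> (\<exists>j<d. u j = 0) \<longrightarrow> C u = 0) \<and>
     (\<forall>j<d. \<forall>x. 0 \<le> x \<and> x \<le> 1 \<longrightarrow> C (\<lambda>i. if i = j then x else 1) = x) \<and>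
     (\<forall>a b. (\<forall>j<d. 0 \<le> a j \<and> a j \<le> b j \<and> b j \<le> 1) \<longrightarrow>
        0 \<le> (\<Sum>T\<in>Pow {..<d}. (-1) ^ card T * C (\<lambda>j. if j \<in> T then a j else b j)))"

definition gen_inv :: "(real \<Rightarrow> ennreal) \<Rightarrow> ennreal \<Rightarrow> real" where
  "gen_inv \<phi> y = Inf {u \<in> {0..1}. \<phi> u \<le> y}"

definition archimedean_copula :: "nat \<Rightarrow> (real \<Rightarrow> ennreal) \<Rightarrow> (nat \<Rightarrow> real) \<Rightarrow> real" where
  "archimedean_copula d \<phi> u = gen_inv \<phi> (\<Sum>j<d. \<phi> (u j))"

definition archimedean_generator :: "nat \<Rightarrow> (real \<Rightarrow> ennreal) \<Rightarrow> bool" where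
  "archimedean_generator d \<phi> \<longleftrightarrow>
     (\<forall>x y t. 0 \<le> x \<and> x \<le> 1 \<and> 0 \<le> y \<and> y \<le> 1 \<and> 0 \<le> t \<and> t \<le> 1 \<longrightarrow>
        \<phi> ((1 - t) * x + t * y) \<le> ennreal (1 - t) * \<phi> x + ennreal t * \<phi> y) \<and>
     (\<forall>x y. 0 \<le> x \<and> x \<le> y \<and> y \<le> 1 \<longrightarrow> \<phi> y \<le> \<phi> x) \<and>
     \<phi> 1 = 0 \<and>
     is_copula d (archimedean_copula d \<phi>)"

text \<open>Survival copula of a copula C (i.e. of a random vector U ~ C):
  hat C(v) = P(U_j > 1 - v_j for all j), written out by inclusion-exclusion.\<close>
definition survival_copula :: "nat \<Rightarrow> ((nat \<Rightarrow> real) \<Rightarrow> real) \<Rightarrow> (nat \<Rightarrow> real) \<Rightarrow> real" where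
  "survival_copula d C v =
     (\<Sum>T\<in>Pow {..<d}. (-1) ^ card T * C (\<lambda>j. if j \<in> T then 1 - v j else 1))"

definition surv_marg :: "nat \<Rightarrow> ((nat \<Rightarrow> real) \<Rightarrow> real) \<Rightarrow> nat set \<Rightarrow> real \<Rightarrow> real" where
  "surv_marg d C S u = survival_copula d C (\<lambda>j. if j \<in> S then u else 1)"

definition pairwise_asymp_indep :: "nat \<Rightarrow> ((nat \<Rightarrow> real) \<Rightarrow> real) \<Rightarrow> bool" where
  "pairwise_asymp_indep d C \<longleftrightarrow>
     (\<forall>j l. j < d \<and> l < d \<and> j \<noteq> l \<longrightarrow>
        (\<lambda>u. surv_marg d C {j, l} u) \<in> o[at_right 0](\<lambda>u. u))"

text \<open>Division by zero gives 0 in Isabelle, matching the convention 0/0 := 0.\<close>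
definition mutual_asymp_indep :: "nat \<Rightarrow> ((nat \<Rightarrow> real) \<Rightarrow> real) \<Rightarrow> bool" where
  "mutual_asymp_indep d C \<longleftrightarrow>
     (\<forall>S l. S \<subseteq> {..<d} \<and> card S \<ge> 2 \<and> l \<in> S \<longrightarrow>
        ((\<lambda>u. surv_marg d C S u / surv_marg d C (S - {l}) u) \<longlongrightarrow> 0) (at_right 0))"

end

theory Submission imports Defs begin

definition diffs :: "(real \<Rightarrow> real) \<Rightarrow> nat set \<Rightarrow> real \<Rightarrow> real \<Rightarrow> real" where
  "diffs F S s h = (\<Sum>T\<in>Pow S. (-1) ^ card T * F (s + real (card T) * h))"

lemma diffs_empty[simp]: "diffs F {} s h = F s"
  by (simp add: diffs_def)

lemma diffs_insert:
  assumes "finite S" "x \<notin> S"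
  shows "diffs F (insert x S) s h = diffs F S s h - diffs F S (s + h) h"
proof -
  have disj: "Pow S \<inter> insert x ` Pow S = {}" using assms(2) by auto
  have inj: "inj_on (insert x) (Pow S)"
    unfolding inj_on_def using assms(2) by (metis PowD insert_ident subsetD)
  have "diffs F (insert x S) s h = (\<Sum>T\<in>Pow S. (-1) ^ card T * F (s + real (card T) * h))
      + (\<Sum>T\<in>insert x ` Pow S. (-1) ^ card T * F (s + real (card T) * h))"
    unfolding diffs_def Pow_insert using assms(1) disj by (simp add: sum.union_disjoint)
  also have "(\<Sum>T\<in>insert x ` Pow S. (-1) ^ card T * F (s + real (card T) * h))
      = (\<Sum>T\<in>Pow S. (-1) ^ card (insert x T) * F (s + real (card (insert x T)) * h))"
    by (simp add: sum.reindex[OF inj])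
  also have "\<dots> = (\<Sum>T\<in>Pow S. - ((-1) ^ card T * F ((s + h) + real (card T) * h)))"
  proof (rule sum.cong)
    fix T assume "T \<in> Pow S"
    then have "finite T" "x \<notin> T" using assms finite_subset by auto
    then show "(-1) ^ card (insert x T) * F (s + real (card (insert x T)) * h)
        = - ((-1) ^ card T * F ((s + h) + real (card T) * h))"
      by (simp add: algebra_simps)
  qed simp
  finally show ?thesis by (simp add: diffs_def sum_negf)
qed

lemma diffs_single: "diffs F {a} s h = F s - F (s + h)"
  using diffs_insert[of "{}" a F s h] by simp

locale arch =
  fixes d :: nat and \<phi> :: "real \<Rightarrow> ennreal" and D :: "nat \<Rightarrow> real \<Rightarrow> real"
  assumes d2: "d \<ge> 2"
    and gen: "archimedean_generator d \<phi>"
    and D0: "\<forall>t\<ge>0. D 0 t = gen_inv \<phi> (ennreal t)"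
    and Dd: "\<forall>j<d. \<forall>t\<ge>0. (D j has_real_derivative D (Suc j) t) (at t within {0..})"
    and Dc: "\<forall>j\<le>d. continuous_on {0..} (D j)"
begin

lemma mvt_diffs:
  assumes "finite S"
  shows "\<And>j s. j + card S \<le> d \<Longrightarrow> s \<ge> 0 \<Longrightarrow> h \<ge> 0 \<Longrightarrow>
     \<exists>\<xi>\<in>{s..s + real (card S) * h}. diffs (D j) S s h = (-h) ^ card S * D (j + card S) \<xi>"
  using assms
proof (induction S rule: finite_induct)
  case empty
  then show ?case by auto
next
  case (insert x S)
  define G where "G = (\<lambda>y. diffs (D j) S y h)"
  have jd: "j < d" using insert by simp
  have der: "(G has_derivative (*) (diffs (D (Suc j)) S y h)) (at y within {s..s+h})"
    if y: "s \<le> y" for y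
  proof -
    have "((\<lambda>y. \<Sum>T\<in>Pow S. (-1) ^ card T * D j (y + real (card T) * h)) has_field_derivative
        (\<Sum>T\<in>Pow S. (-1) ^ card T * D (Suc j) (y + real (card T) * h))) (at y within {s..s+h})"
    proof (rule DERIV_sum, rule DERIV_cmult)
      fix T
      let ?g = "\<lambda>y. y + real (card T) * h"
      have "(D j has_real_derivative D (Suc j) (?g y)) (at (?g y) within {0..})"
        using Dd jd y insert.prems by simp
      then have "(D j has_real_derivative D (Suc j) (?g y)) (at (?g y) within (?g ` {s..s+h}))"
        by (rule has_field_derivative_subset) (use insert.prems in auto)
      moreover have "(?g has_real_derivative 1) (at y within {s..s+h})"
        by (auto intro!: derivative_eq_intros)
      ultimately have "(D j \<circ> ?g has_real_derivative D (Suc j) (?g y) * 1) (at y within {s..s+h})"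
        by (rule DERIV_image_chain)
      then show "((\<lambda>y. D j (y + real (card T) * h)) has_real_derivative D (Suc j) (?g y)) (at y within {s..s+h})"
        by (simp add: o_def)
    qed
    then show ?thesis unfolding G_def diffs_def has_field_derivative_def by simp
  qed
  obtain \<eta> where \<eta>: "\<eta> \<in> {s..s+h}" and eq: "G (s + h) - G s = diffs (D (Suc j)) S \<eta> h * h"
    using mvt_very_simple[of s "s+h" G "\<lambda>y. (*) (diffs (D (Suc j)) S y h)"] der insert.prems
    by auto
  have "\<exists>\<xi>\<in>{\<eta>..\<eta> + real (card S) * h}. diffs (D (Suc j)) S \<eta> h = (-h) ^ card S * D (Suc j + card S) \<xi>"
    using insert.IH[of "Suc j" \<eta>] insert.prems insert.hyps \<eta> by auto
  then obtain \<xi> where \<xi>: "\<xi> \<in> {\<eta>..\<eta> + real (card S) * h}"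
    and e2: "diffs (D (Suc j)) S \<eta> h = (-h) ^ card S * D (Suc j + card S) \<xi>" by blast
  have "diffs (D j) (insert x S) s h = - (G (s + h) - G s)"
    using diffs_insert[OF insert.hyps] G_def by simp
  also have "\<dots> = (-h) ^ card (insert x S) * D (j + card (insert x S)) \<xi>"
    using eq e2 insert.hyps by simp
  finally show ?case using \<xi> \<eta> insert.hyps by (intro bexI[of _ \<xi>]) (auto simp: algebra_simps)
qed

abbreviation "C \<equiv> archimedean_copula d \<phi>"
definition "f x = enn2real (\<phi> x)"
definition "c0 = f (1/2)"

lemma iscop: "is_copula d C" using gen by (simp add: archimedean_generator_def)
lemma phi1: "\<phi> 1 = 0" using gen by (simp add: archimedean_generator_def)
lemma phimono: "0 \<le> x \<Longrightarrow> x \<le> y \<Longrightarrow> y \<le> 1 \<Longrightarrow> \<phi> y \<le> \<phi> x"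
  using gen by (simp add: archimedean_generator_def)
lemma phiconv: "0 \<le> x \<Longrightarrow> x \<le> 1 \<Longrightarrow> 0 \<le> y \<Longrightarrow> y \<le> 1 \<Longrightarrow> 0 \<le> t \<Longrightarrow> t \<le> 1 \<Longrightarrow>
        \<phi> ((1 - t) * x + t * y) \<le> ennreal (1 - t) * \<phi> x + ennreal t * \<phi> y"
  using gen unfolding archimedean_generator_def by blast

lemma margin: assumes "0 \<le> x" "x \<le> 1" shows "gen_inv \<phi> (\<phi> x) = x"
proof -
  have "C (\<lambda>i. if i = 0 then x else 1) = x"
    using iscop assms d2 unfolding is_copula_def by auto
  moreover have "(\<Sum>i<d. \<phi> (if i = 0 then x else 1)) = \<phi> x"
  proof -
    have "(\<Sum>i<d. \<phi> (if i = 0 then x else 1)) = (\<Sum>i<d. if i = 0 then \<phi> x else 0)"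
      by (rule sum.cong) (auto simp: phi1)
    also have "\<dots> = \<phi> x" using d2 by (simp add: sum.delta)
    finally show ?thesis .
  qed
  ultimately show ?thesis by (simp add: archimedean_copula_def)
qed

lemma psi0: "D 0 0 = 1"
  using D0 margin[of 1] by (simp add: phi1)

lemma phi_inj: assumes "0 \<le> x" "x \<le> 1" "0 \<le> y" "y \<le> 1" "\<phi> x = \<phi> y" shows "x = y"
proof -
  have "x = gen_inv \<phi> (\<phi> x)" by (rule margin[symmetric]) (use assms in auto)
  also have "\<dots> = gen_inv \<phi> (\<phi> y)" using assms by simp
  also have "\<dots> = y" by (rule margin) (use assms in auto)
  finally show ?thesis .
qed

lemma phi_fin: assumes "0 < x" "x \<le> 1" shows "\<phi> x \<noteq> top"
proof
  assume "\<phi> x = top"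
  then have "gen_inv \<phi> top = x" using margin[of x] assms by simp
  moreover have "gen_inv \<phi> top = 0"
  proof -
    have "{u \<in> {0..1}. \<phi> u \<le> top} = {0..(1::real)}" by auto
    then show ?thesis unfolding gen_inv_def by simp
  qed
  ultimately show False using assms by simp
qed

lemma phi_f: "0 < x \<Longrightarrow> x \<le> 1 \<Longrightarrow> \<phi> x = ennreal (f x)"
  using phi_fin by (simp add: f_def less_top)

lemma f_nonneg: "0 \<le> f x" by (simp add: f_def)

lemma c0_pos: "c0 > 0"
proof -
  have "\<phi> (1/2) \<noteq> 0"
  proof
    assume "\<phi> (1/2) = 0"
    then have "\<phi> (1/2) = \<phi> 1" by (simp add: phi1)
    then show False using phi_inj[of "1/2" 1] by simp
  qed
  then have "f (1/2) \<noteq> 0" using phi_f[of "1/2"] by auto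
  then show ?thesis using f_nonneg unfolding c0_def by (simp add: less_le)
qed

lemma f_bound: assumes "0 \<le> u" "u \<le> 1/2" shows "f (1 - u) \<le> 2 * u * c0"
proof -
  have "\<phi> ((1 - (1 - 2*u)) * (1/2) + (1 - 2*u) * 1) \<le> ennreal (1 - (1 - 2*u)) * \<phi> (1/2) + ennreal (1 - 2*u) * \<phi> 1"
    using assms by (intro phiconv) auto
  moreover have "(1 - (1 - 2*u)) * (1/2) + (1 - 2*u) * 1 = 1 - u" by simp
  ultimately have "ennreal (f (1 - u)) \<le> ennreal (2*u) * ennreal c0"
    using assms phi_f[of "1-u"] phi_f[of "1/2"] by (simp add: phi1 c0_def)
  then have "ennreal (f (1 - u)) \<le> ennreal (2*u*c0)" using assms c0_pos by (simp add: ennreal_mult)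
  then show ?thesis using assms c0_pos by (simp add: ennreal_le_iff)
qed

lemma f_convex: "convex_on {0<..<1} f"
proof (rule convex_onI)
  fix t x y :: real assume t: "0 < t" "t < 1" and x: "x \<in> {0<..<1}" and y: "y \<in> {0<..<1}"
  have "\<phi> ((1 - t) * x + t * y) \<le> ennreal (1 - t) * \<phi> x + ennreal t * \<phi> y"
    using t x y by (intro phiconv) auto
  also have "\<dots> = ennreal ((1 - t) * f x + t * f y)"
  proof -
    have "ennreal (1 - t) * \<phi> x = ennreal ((1 - t) * f x)"
      using t x phi_f[of x] f_nonneg[of x] by (simp add: ennreal_mult)
    moreover have "ennreal t * \<phi> y = ennreal (t * f y)"
      using t y phi_f[of y] f_nonneg[of y] by (simp add: ennreal_mult)
    ultimately show ?thesis using t f_nonneg[of x] f_nonneg[of y] by (simp add: ennreal_plus)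
  qed
  finally have "ennreal (f ((1 - t) * x + t * y)) \<le> ennreal ((1 - t) * f x + t * f y)"
  proof -
    have "0 < (1 - t) * x + t * y" using t x y by (simp add: add_pos_pos)
    moreover have "(1 - t) * x + t * y \<le> 1"
      using t x y convex_bound_le[of x 1 y "1-t" t] by simp
    ultimately have "\<phi> ((1 - t) * x + t * y) = ennreal (f ((1 - t) * x + t * y))" by (rule phi_f)
    then show ?thesis using \<open>\<phi> ((1 - t) * x + t * y) \<le> _\<close> \<open>ennreal (1 - t) * \<phi> x + ennreal t * \<phi> y = _\<close>
      by simp
  qed
  moreover have "0 \<le> (1 - t) * f x + t * f y"
    using t f_nonneg[of x] f_nonneg[of y] by simp
  ultimately show "f ((1 - t) *\<^sub>R x + t *\<^sub>R y) \<le> (1 - t) * f x + t * f y"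
    by (simp add: ennreal_le_iff del: ennreal_plus)
qed (simp add: convex_real_interval)

lemma f_cont: "continuous_on {0<..<1} f"
  by (rule convex_on_continuous[OF _ f_convex]) simp

lemma phi_surj: assumes "0 \<le> y" "y \<le> c0" shows "\<exists>v\<in>{1/2..1}. \<phi> v = ennreal y"
proof (cases "y = 0")
  case True then show ?thesis by (intro bexI[of _ 1]) (auto simp: phi1)
next
  case False
  define u where "u = y / (2 * c0)"
  have u: "0 < u" "u \<le> 1/2" using assms False c0_pos by (auto simp: u_def field_simps)
  have "f (1 - u) \<le> y" using f_bound[of u] u c0_pos by (simp add: u_def)
  moreover have "y \<le> f (1/2)" using assms by (simp add: c0_def)
  moreover have "continuous_on {1/2..1-u} f"
    by (rule continuous_on_subset[OF f_cont]) (use u in auto)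
  ultimately obtain v where "1/2 \<le> v" "v \<le> 1 - u" "f v = y"
    using IVT2'[of f "1-u" y "1/2"] u by auto
  then show ?thesis using phi_f[of v] u by (intro bexI[of _ v]) auto
qed

lemma grounded: "(\<forall>j<d. 0 \<le> u j \<and> u j \<le> 1) \<Longrightarrow> j < d \<Longrightarrow> u j = 0 \<Longrightarrow> C u = 0"
  using iscop unfolding is_copula_def by blast

lemma volume:
  assumes S: "S \<subseteq> {..<d}" and p: "0 \<le> p" "p \<le> 1" and q: "0 \<le> q" "q \<le> 1"
    and pa: "\<phi> p = ennreal \<alpha>" and qb: "\<phi> q = ennreal \<beta>" and ab: "0 \<le> \<alpha>" "0 \<le> \<beta>"
  shows "(\<Sum>T\<in>Pow {..<d}. (-1) ^ card T * C (\<lambda>j. if j \<in> T then (if j \<in> S then p else 0) else (if j \<in> S then q else 1)))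
       = diffs (D 0) S (real (card S) * \<beta>) (\<alpha> - \<beta>)"
proof -
  let ?u = "\<lambda>T j. if j \<in> T then (if j \<in> S then p else 0) else (if j \<in> S then q else 1)"
  have fS: "finite S" using S finite_subset by blast
  have "(\<Sum>T\<in>Pow {..<d}. (-1) ^ card T * C (?u T)) = (\<Sum>T\<in>Pow S. (-1) ^ card T * C (?u T))"
  proof (rule sum.mono_neutral_right)
    show "\<forall>T\<in>Pow {..<d} - Pow S. (-1) ^ card T * C (?u T) = 0"
    proof
      fix T assume "T \<in> Pow {..<d} - Pow S"
      then obtain i where i: "i \<in> T" "i \<notin> S" "i < d" by auto
      have "C (?u T) = 0"
        by (rule grounded[of _ i]) (use i p q in auto)
      then show "(-1) ^ card T * C (?u T) = 0" by simp
    qed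
  qed (use S in auto)
  also have "\<dots> = diffs (D 0) S (real (card S) * \<beta>) (\<alpha> - \<beta>)"
    unfolding diffs_def
  proof (rule sum.cong)
    fix T assume T: "T \<in> Pow S"
    then have TS: "T \<subseteq> S" by auto
    have fT: "finite T" using fS TS finite_subset by blast
    have "(\<Sum>i<d. \<phi> (?u T i)) = (\<Sum>i<d. ennreal ((if i \<in> T then \<alpha> else 0) + (if i \<in> S - T then \<beta> else 0)))"
      by (rule sum.cong) (use TS pa qb phi1 in auto)
    also have "\<dots> = ennreal (\<Sum>i<d. (if i \<in> T then \<alpha> else 0) + (if i \<in> S - T then \<beta> else 0))"
      by (rule sum_ennreal) (use ab in auto)
    also have "(\<Sum>i<d. (if i \<in> T then \<alpha> else 0) + (if i \<in> S - T then \<beta> else 0))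
        = real (card T) * \<alpha> + real (card (S - T)) * \<beta>"
    proof -
      have "(\<Sum>i<d. (if i \<in> T then \<alpha> else 0) + (if i \<in> S - T then \<beta> else 0))
          = (\<Sum>i\<in>{..<d} \<inter> T. \<alpha>) + (\<Sum>i\<in>{..<d} \<inter> (S - T). \<beta>)"
        unfolding sum.distrib by (simp only: sum.inter_restrict[OF finite_lessThan])
      also have "{..<d} \<inter> T = T" using TS S by auto
      also have "{..<d} \<inter> (S - T) = S - T" using S by auto
      finally show ?thesis by simp
    qed
    also have "real (card T) * \<alpha> + real (card (S - T)) * \<beta> = real (card S) * \<beta> + real (card T) * (\<alpha> - \<beta>)"
    proof -
      have "card (S - T) = card S - card T" using TS fT by (simp add: card_Diff_subset)
      moreover have "card T \<le> card S" using TS fS by (simp add: card_mono)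
      ultimately show ?thesis by (simp add: of_nat_diff algebra_simps)
    qed
    finally have eq: "(\<Sum>i<d. \<phi> (?u T i)) = ennreal (real (card S) * \<beta> + real (card T) * (\<alpha> - \<beta>))" .
    have nn: "0 \<le> real (card S) * \<beta> + real (card T) * (\<alpha> - \<beta>)"
    proof -
      have "card T \<le> card S" using TS fS by (simp add: card_mono)
      then have "real (card T) * \<beta> \<le> real (card S) * \<beta>" using ab by (simp add: mult_right_mono)
      moreover have "0 \<le> real (card T) * \<alpha>" using ab by simp
      ultimately show ?thesis by (simp add: algebra_simps)
    qed
    show "(-1) ^ card T * C (?u T) = (-1) ^ card T * D 0 (real (card S) * \<beta> + real (card T) * (\<alpha> - \<beta>))"
      using eq nn D0 by (simp add: archimedean_copula_def)
  qed simp
  finally show ?thesis .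
qed

lemma volume_nonneg:
  assumes S: "S \<subseteq> {..<d}" and "0 \<le> a" "a \<le> b" "b \<le> 1"
  shows "0 \<le> (\<Sum>T\<in>Pow {..<d}. (-1) ^ card T * C (\<lambda>j. if j \<in> T then (if j \<in> S then a else 0) else (if j \<in> S then b else 1)))"
proof -
  have "0 \<le> (\<Sum>T\<in>Pow {..<d}. (-1) ^ card T * C (\<lambda>j. if j \<in> T then (\<lambda>j. if j \<in> S then a else 0) j else (\<lambda>j. if j \<in> S then b else 1) j))"
    using iscop assms unfolding is_copula_def by (elim conjE, erule_tac x="\<lambda>j. if j \<in> S then a else 0" in allE,
       erule_tac x="\<lambda>j. if j \<in> S then b else 1" in allE) auto
  then show ?thesis by simp
qed

lemma diffs_nonneg:
  assumes S: "S \<subseteq> {..<d}" and "S \<noteq> {}" and x: "0 \<le> x" "x \<le> c0 / 2" and h: "0 \<le> h" "h \<le> c0 / 2"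
  shows "0 \<le> diffs (D 0) S x h"
proof -
  have fS: "finite S" using S finite_subset by blast
  have k: "card S \<ge> 1" using fS assms(2) by (simp add: Suc_le_eq card_gt_0_iff)
  define \<beta> where "\<beta> = x / card S"
  define \<alpha> where "\<alpha> = \<beta> + h"
  have "x * 1 \<le> x * real (card S)" using x k by (intro mult_left_mono) auto
  then have b: "0 \<le> \<beta>" "\<beta> \<le> x" using x k by (auto simp: \<beta>_def divide_le_eq)
  have a: "0 \<le> \<alpha>" "\<alpha> \<le> c0" using b h x by (auto simp: \<alpha>_def)
  obtain v where v: "v \<in> {1/2..1}" "\<phi> v = ennreal \<beta>" using phi_surj[of \<beta>] b x c0_pos by auto
  obtain w where w: "w \<in> {1/2..1}" "\<phi> w = ennreal \<alpha>" using phi_surj[of \<alpha>] a by auto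
  have wv: "w \<le> v"
  proof (rule ccontr)
    assume "\<not> w \<le> v"
    then have "\<phi> w \<le> \<phi> v" using v w by (intro phimono) auto
    then have "\<alpha> \<le> \<beta>" using v w b by (simp add: ennreal_le_iff)
    then have "h = 0" using h by (simp add: \<alpha>_def)
    then have "\<phi> w = \<phi> v" using v w by (simp add: \<alpha>_def)
    then have "w = v" using v w by (intro phi_inj) auto
    then show False using \<open>\<not> w \<le> v\<close> by simp
  qed
  have "0 \<le> diffs (D 0) S (real (card S) * \<beta>) (\<alpha> - \<beta>)"
    using volume_nonneg[OF S, of w v] volume[OF S, of w v \<alpha> \<beta>] v w wv a b by auto
  moreover have "real (card S) * \<beta> = x" using k by (simp add: \<beta>_def)
  ultimately show ?thesis by (simp add: \<alpha>_def)
qed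

lemma sign:
  assumes j: "1 \<le> j" "j \<le> d" and x: "0 \<le> x" "x \<le> c0 / 2"
  shows "0 \<le> (-1) ^ j * D j x"
proof (rule ccontr)
  assume neg: "\<not> 0 \<le> (-1) ^ j * D j x"
  then have nz: "D j x \<noteq> 0" by auto
  have "continuous_on {0..} (D j)" using Dc j by simp
  then obtain \<delta> where \<delta>: "\<delta> > 0" and cont: "\<And>y. y \<in> {0..} \<Longrightarrow> dist y x < \<delta> \<Longrightarrow> dist (D j y) (D j x) < \<bar>D j x\<bar>"
    using x nz unfolding continuous_on_iff by (metis atLeast_iff zero_less_abs_iff)
  define h where "h = min (c0 / 2) (\<delta> / (2 * j))"
  have h: "0 < h" "h \<le> c0/2" "real j * h < \<delta>" using c0_pos \<delta> j
    by (auto simp: h_def min_def field_simps)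
  have "0 \<le> diffs (D 0) {..<j} x h"
    using j x h by (intro diffs_nonneg) (auto simp: lessThan_empty_iff)
  moreover obtain \<xi> where \<xi>: "\<xi> \<in> {x..x + real j * h}" and eq: "diffs (D 0) {..<j} x h = (-h) ^ j * D j \<xi>"
    using mvt_diffs[of "{..<j}" 0 x h] j x h by auto
  moreover have "(-h) ^ j * D j \<xi> = h ^ j * ((-1) ^ j * D j \<xi>)"
    by (simp add: power_minus[of h j] mult_ac)
  ultimately have "0 \<le> h ^ j * ((-1) ^ j * D j \<xi>)" by simp
  moreover have "0 < h ^ j" using h by simp
  ultimately have g\<xi>: "0 \<le> (-1) ^ j * D j \<xi>" by (meson zero_le_mult_iff not_le)
  have "dist (D j \<xi>) (D j x) < \<bar>D j x\<bar>" using \<xi> h x by (intro cont) (auto simp: dist_real_def)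
  then have "0 < D j \<xi> * D j x" unfolding dist_real_def by (smt (verit) mult_neg_neg mult_pos_pos)
  moreover have pe: "((-1) ^ j * D j \<xi>) * ((-1) ^ j * D j x) = D j \<xi> * D j x"
  proof -
    have "(-1::real) ^ j * (-1) ^ j = 1" by (simp flip: power_mult_distrib)
    then show ?thesis by (metis (no_types, lifting) mult.assoc mult.commute mult_1)
  qed
  ultimately have "0 < ((-1) ^ j * D j \<xi>) * ((-1) ^ j * D j x)" by (simp only: pe)
  moreover have "((-1) ^ j * D j \<xi>) * ((-1) ^ j * D j x) \<le> 0"
    using g\<xi> neg mult_nonneg_nonpos[of "(-1) ^ j * D j \<xi>" "(-1) ^ j * D j x"] by linarith
  ultimately show False by linarith
qed

lemma mvt_g:
  assumes "finite S" "j + card S \<le> d" "s \<ge> 0" "h \<ge> 0"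
  shows "\<exists>\<xi>\<in>{s..s + real (card S) * h}. diffs (D j) S s h = h ^ card S * ((-1) ^ card S * D (j + card S) \<xi>)"
proof -
  obtain \<xi> where "\<xi>\<in>{s..s + real (card S) * h}" "diffs (D j) S s h = (-h) ^ card S * D (j + card S) \<xi>"
    using mvt_diffs[OF assms(1)] assms by blast
  moreover have "(-h) ^ card S * D (j + card S) \<xi> = h ^ card S * ((-1) ^ card S * D (j + card S) \<xi>)"
    by (simp add: power_minus[of h] mult_ac)
  ultimately show ?thesis by auto
qed

lemma ratio_lim:
  assumes S: "S \<subseteq> {..<d}" and k2: "card S \<ge> 2" and l: "l \<in> S"
  shows "((\<lambda>t. diffs (D 0) S 0 t / diffs (D 0) (S - {l}) 0 t) \<longlongrightarrow> 0) (at_right 0)"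
proof -
  define S' where "S' = S - {l}"
  have fS: "finite S" using S finite_subset by blast
  have fS': "finite S'" using fS by (simp add: S'_def)
  have SS: "S = insert l S'" "l \<notin> S'" using l by (auto simp: S'_def)
  define m where "m = card S'"
  have cS: "card S = Suc m" using SS fS' by (simp add: m_def)
  have m1: "1 \<le> m" using k2 cS by simp
  have kd: "Suc m \<le> d" using cS card_mono[OF _ S] by fastforce
  define g where "g i y = (-1) ^ i * D i y" for i y
  have N: "\<exists>\<xi>\<in>{0..real (Suc m) * t}. diffs (D 0) S 0 t = t ^ Suc m * g (Suc m) \<xi>" if "t \<ge> 0" for t
    using mvt_g[OF fS, of 0 0 t] that kd cS by (simp add: g_def)
  have Dn: "\<exists>\<xi>\<in>{s..s + real m * t}. diffs (D 0) S' s t = t ^ m * g m \<xi>" if "t \<ge> 0" "s \<ge> 0" for s t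
    using mvt_g[OF fS', of 0 s t] that kd by (simp add: g_def m_def)
  show ?thesis
  proof (cases "g m 0 > 0")
    case True
    define a where "a = g m 0"
    have "continuous_on {0..} (D m)" using Dc kd by simp
    then obtain \<delta>1 where \<delta>1: "\<delta>1 > 0" and c1: "\<And>y. y \<in> {0..} \<Longrightarrow> dist y 0 < \<delta>1 \<Longrightarrow> dist (D m y) (D m 0) < a / 2"
      using True unfolding continuous_on_iff a_def by (metis atLeast_iff order_refl half_gt_zero)
    have "continuous_on {0..} (D (Suc m))" using Dc kd by simp
    then obtain \<delta>2 where \<delta>2: "\<delta>2 > 0" and c2: "\<And>y. y \<in> {0..} \<Longrightarrow> dist y 0 < \<delta>2 \<Longrightarrow> dist (D (Suc m) y) (D (Suc m) 0) < 1"
      unfolding continuous_on_iff by (metis atLeast_iff order_refl zero_less_one)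
    define B where "B = \<bar>D (Suc m) 0\<bar> + 1"
    have gm: "g m y > a / 2" if "0 \<le> y" "y < \<delta>1" for y
    proof -
      have "\<bar>D m y - D m 0\<bar> < a / 2" using c1[of y] that by (simp add: dist_real_def)
      moreover have "\<bar>g m y - g m 0\<bar> = \<bar>D m y - D m 0\<bar>"
      proof -
        have "g m y - g m 0 = (-1) ^ m * (D m y - D m 0)" by (simp add: g_def algebra_simps)
        then show ?thesis by (simp add: abs_mult)
      qed
      ultimately show ?thesis unfolding a_def by linarith
    qed
    have gk: "\<bar>g (Suc m) y\<bar> \<le> B" if "0 \<le> y" "y < \<delta>2" for y
    proof -
      have "\<bar>D (Suc m) y - D (Suc m) 0\<bar> < 1" using c2[of y] that by (simp add: dist_real_def)
      then show ?thesis by (simp add: g_def B_def abs_mult)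
    qed
    have ev: "eventually (\<lambda>t. norm (diffs (D 0) S 0 t / diffs (D 0) S' 0 t) \<le> (2 * B / a) * t) (at_right 0)"
      unfolding eventually_at_right_field
    proof (intro exI[of _ "min \<delta>1 \<delta>2 / real (Suc m)"] conjI allI impI)
      show "0 < min \<delta>1 \<delta>2 / real (Suc m)" using \<delta>1 \<delta>2 by simp
      fix t :: real assume t: "0 < t" "t < min \<delta>1 \<delta>2 / real (Suc m)"
      then have tk: "real (Suc m) * t < min \<delta>1 \<delta>2" by (simp add: field_simps)
      obtain \<xi> where \<xi>: "\<xi> \<in> {0..real (Suc m) * t}" and e1: "diffs (D 0) S 0 t = t ^ Suc m * g (Suc m) \<xi>"
        using N[of t] t by auto
      obtain \<xi>' where \<xi>': "\<xi>' \<in> {0..0 + real m * t}" and e2: "diffs (D 0) S' 0 t = t ^ m * g m \<xi>'"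
        using Dn[of t 0] t by auto
      have "real m * t \<le> real (Suc m) * t" using t by (simp add: mult_right_mono)
      then have a1: "g m \<xi>' > a / 2" using \<xi>' tk by (intro gm) auto
      have a2: "\<bar>g (Suc m) \<xi>\<bar> \<le> B" using \<xi> tk by (intro gk) auto
      have apos: "a > 0" using True a_def by simp
      have "diffs (D 0) S 0 t / diffs (D 0) S' 0 t = t * g (Suc m) \<xi> / g m \<xi>'"
        using e1 e2 t by (simp add: field_simps)
      also have "norm \<dots> = t * \<bar>g (Suc m) \<xi>\<bar> / g m \<xi>'" using t a1 apos by (simp add: abs_mult)
      also have "\<dots> \<le> t * B / (a / 2)"
        using t a1 a2 apos by (intro frac_le) (auto intro: mult_left_mono)
      also have "\<dots> = (2 * B / a) * t" by (simp add: field_simps)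
      finally show "norm (diffs (D 0) S 0 t / diffs (D 0) S' 0 t) \<le> (2 * B / a) * t" .
    qed
    have "((\<lambda>t. (2 * B / a) * t) \<longlongrightarrow> 0) (at_right 0)"
      by (rule tendsto_eq_intros) (auto intro: tendsto_eq_intros)
    with ev show ?thesis unfolding S'_def by (rule Lim_null_comparison)
  next
    case False
    have gm0: "g m y = 0" if y: "0 \<le> y" "y \<le> c0 / 2" for y
    proof -
      have ge: "0 \<le> g m y" using sign[of m y] m1 kd y by (simp add: g_def)
      obtain \<xi> where \<xi>: "\<xi> \<in> {0..0 + real (card {0::nat}) * y}"
        and e: "diffs (D m) {0} 0 y = y ^ card {0::nat} * ((-1) ^ card {0::nat} * D (m + card {0::nat}) \<xi>)"
        using mvt_g[of "{0::nat}" m 0 y] kd y by auto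
      have "D m 0 - D m y = y * (- D (Suc m) \<xi>)" using e by (simp add: diffs_single)
      then have hy: "D m y = D m 0 + y * D (Suc m) \<xi>" by simp
      have "g m 0 - g m y = (-1) ^ m * D m 0 - (-1) ^ m * (D m 0 + y * D (Suc m) \<xi>)"
        unfolding g_def hy ..
      also have "\<dots> = y * g (Suc m) \<xi>" by (simp add: g_def algebra_simps)
      finally have "g m 0 - g m y = y * g (Suc m) \<xi>" .
      moreover have "0 \<le> g (Suc m) \<xi>" using sign[of "Suc m" \<xi>] kd \<xi> y by (simp add: g_def)
      ultimately have "g m y \<le> g m 0" using y by (simp add: algebra_simps)
      then show ?thesis using ge False by simp
    qed
    have ev: "eventually (\<lambda>t. diffs (D 0) S 0 t / diffs (D 0) S' 0 t = 0) (at_right 0)"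
      unfolding eventually_at_right_field
    proof (intro exI[of _ "c0 / 2 / real (Suc m)"] conjI allI impI)
      show "0 < c0 / 2 / real (Suc m)" using c0_pos by simp
      fix t :: real assume t: "0 < t" "t < c0 / 2 / real (Suc m)"
      then have tk: "real (Suc m) * t < c0 / 2" by (simp add: field_simps)
      have mt: "real m * t \<le> real (Suc m) * t" using t by (simp add: mult_right_mono)
      obtain \<xi>' where \<xi>': "\<xi>' \<in> {0..0 + real m * t}" and e2: "diffs (D 0) S' 0 t = t ^ m * g m \<xi>'"
        using Dn[of t 0] t by auto
      obtain \<xi>'' where \<xi>'': "\<xi>'' \<in> {t..t + real m * t}" and e3: "diffs (D 0) S' t t = t ^ m * g m \<xi>''"
        using Dn[of t t] t by auto
      have "g m \<xi>' = 0" using \<xi>' mt tk by (intro gm0) auto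
      moreover have "g m \<xi>'' = 0" using \<xi>'' t tk by (intro gm0) (auto simp: algebra_simps)
      ultimately have "diffs (D 0) S 0 t = 0"
        using e2 e3 diffs_insert[OF fS' SS(2)] SS(1) by simp
      then show "diffs (D 0) S 0 t / diffs (D 0) S' 0 t = 0" by simp
    qed
    then show ?thesis unfolding S'_def by (rule tendsto_eventually)
  qed
qed

definition "tt u = f (1 - u)"

lemma tt_props: assumes "0 < u" "u \<le> 1/2"
  shows "\<phi> (1 - u) = ennreal (tt u)" "0 < tt u" "tt u \<le> 2 * u * c0"
proof -
  show e: "\<phi> (1 - u) = ennreal (tt u)" using phi_f[of "1-u"] assms by (simp add: tt_def)
  show "tt u \<le> 2 * u * c0" using f_bound[of u] assms by (simp add: tt_def)
  have "\<phi> (1 - u) \<noteq> 0"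
  proof
    assume "\<phi> (1 - u) = 0"
    then have "\<phi> (1 - u) = \<phi> 1" by (simp add: phi1)
    then have "1 - u = 1" using assms by (intro phi_inj) auto
    then show False using assms by simp
  qed
  then show "0 < tt u" using e f_nonneg[of "1-u"] by (auto simp: tt_def less_le)
qed

lemma surv_eq: assumes S: "S \<subseteq> {..<d}" and u: "0 < u" "u \<le> 1/2"
  shows "surv_marg d C S u = diffs (D 0) S 0 (tt u)"
proof -
  have "surv_marg d C S u = (\<Sum>T\<in>Pow {..<d}. (-1) ^ card T * C (\<lambda>j. if j \<in> T then (if j \<in> S then 1 - u else 0) else (if j \<in> S then 1 else 1)))"
    unfolding surv_marg_def survival_copula_def
    by (rule sum.cong) (auto intro!: arg_cong[where f = C])
  also have "\<dots> = diffs (D 0) S (real (card S) * 0) (tt u - 0)"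
    using u tt_props[OF u] by (intro volume[OF S]) (auto simp: phi1)
  finally show ?thesis by simp
qed

lemma tt_filterlim: "filterlim tt (at_right 0) (at_right 0)"
proof -
  have ev: "eventually (\<lambda>u. 0 < u \<and> u \<le> 1/2) (at_right (0::real))"
    unfolding eventually_at_right_field by (intro exI[of _ "1/2"]) auto
  have "eventually (\<lambda>u. norm (tt u) \<le> 2 * c0 * u) (at_right 0)"
  proof (rule eventually_mono[OF ev])
    fix u :: real assume u: "0 < u \<and> u \<le> 1/2"
    then have "0 < tt u" "tt u \<le> 2 * u * c0" using tt_props[of u] by auto
    then show "norm (tt u) \<le> 2 * c0 * u" by (simp add: mult_ac)
  qed
  moreover have "((\<lambda>u. 2 * c0 * u) \<longlongrightarrow> 0) (at_right (0::real))"
    by (rule tendsto_eq_intros) (auto intro: tendsto_eq_intros)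
  ultimately have "(tt \<longlongrightarrow> 0) (at_right 0)" by (rule Lim_null_comparison)
  moreover have "eventually (\<lambda>u. tt u \<in> {0<..} \<and> tt u \<noteq> 0) (at_right 0)"
  proof (rule eventually_mono[OF ev])
    fix u :: real assume u: "0 < u \<and> u \<le> 1/2"
    then have "0 < tt u" using tt_props[of u] by auto
    then show "tt u \<in> {0<..} \<and> tt u \<noteq> 0" by simp
  qed
  ultimately show ?thesis unfolding filterlim_at by simp
qed

lemma mutual: "mutual_asymp_indep d C"
  unfolding mutual_asymp_indep_def
proof (intro allI impI, elim conjE)
  fix S l assume S: "S \<subseteq> {..<d}" and k: "2 \<le> card S" and l: "l \<in> S"
  have ev: "eventually (\<lambda>u. 0 < u \<and> u \<le> 1/2) (at_right (0::real))"
    unfolding eventually_at_right_field by (intro exI[of _ "1/2"]) auto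
  have "eventually (\<lambda>u. diffs (D 0) S 0 (tt u) / diffs (D 0) (S - {l}) 0 (tt u)
      = surv_marg d C S u / surv_marg d C (S - {l}) u) (at_right 0)"
  proof (rule eventually_mono[OF ev])
    fix u :: real assume u: "0 < u \<and> u \<le> 1/2"
    have S': "S - {l} \<subseteq> {..<d}" using S by auto
    show "diffs (D 0) S 0 (tt u) / diffs (D 0) (S - {l}) 0 (tt u)
      = surv_marg d C S u / surv_marg d C (S - {l}) u"
      using surv_eq[OF S, of u] surv_eq[OF S', of u] u by simp
  qed
  moreover have "((\<lambda>u. diffs (D 0) S 0 (tt u) / diffs (D 0) (S - {l}) 0 (tt u)) \<longlongrightarrow> 0) (at_right 0)"
    using filterlim_compose[OF ratio_lim[OF S k l] tt_filterlim] .
  ultimately show "((\<lambda>u. surv_marg d C S u / surv_marg d C (S - {l}) u) \<longlongrightarrow> 0) (at_right 0)"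
    by (rule Lim_transform_eventually[rotated])
qed

lemma pairwise: "pairwise_asymp_indep d C"
  unfolding pairwise_asymp_indep_def
proof (intro allI impI, elim conjE)
  fix j l assume j: "j < d" and l: "l < d" and jl: "j \<noteq> l"
  let ?S = "{j, l}"
  have S: "?S \<subseteq> {..<d}" using j l by auto
  have ev: "eventually (\<lambda>u. 0 < u \<and> u \<le> 1/2) (at_right (0::real))"
    unfolding eventually_at_right_field by (intro exI[of _ "1/2"]) auto
  have lim: "((\<lambda>u. surv_marg d C ?S u / surv_marg d C (?S - {l}) u) \<longlongrightarrow> 0) (at_right 0)"
    using mutual S jl unfolding mutual_asymp_indep_def by auto
  have Sl: "?S - {l} = {j}" using jl by auto
  have single: "surv_marg d C {j} u = u" if u: "0 < u" "u \<le> 1/2" for u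
  proof -
    have "surv_marg d C {j} u = D 0 0 - D 0 (tt u)"
      using surv_eq[of "{j}" u] j u by (simp add: diffs_single)
    also have "D 0 (tt u) = gen_inv \<phi> (\<phi> (1 - u))"
      using D0 tt_props[OF u] by simp
    also have "\<dots> = 1 - u" using u by (intro margin) auto
    finally show ?thesis by (simp add: psi0)
  qed
  have "eventually (\<lambda>u. surv_marg d C ?S u / surv_marg d C (?S - {l}) u = surv_marg d C ?S u / u) (at_right 0)"
    using ev by eventually_elim (use single Sl in auto)
  with lim have "((\<lambda>u. surv_marg d C ?S u / u) \<longlongrightarrow> 0) (at_right 0)"
    by (rule Lim_transform_eventually)
  moreover have "eventually (\<lambda>u. (u::real) \<noteq> 0) (at_right 0)"
    using ev by eventually_elim auto
  ultimately show "(\<lambda>u. surv_marg d C {j, l} u) \<in> o[at_right 0](\<lambda>u. u)"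
    by (rule smalloI_tendsto)
qed

end

theorem mainTheorem5:
  fixes d :: nat and \<phi> :: "real \<Rightarrow> ennreal" and D :: "nat \<Rightarrow> real \<Rightarrow> real"
  assumes "d \<ge> 2"
    and "archimedean_generator d \<phi>"
    and "\<forall>t\<ge>0. D 0 t = gen_inv \<phi> (ennreal t)"
    and "\<forall>j<d. \<forall>t\<ge>0. (D j has_real_derivative D (Suc j) t) (at t within {0..})"
    and "\<forall>j\<le>d. continuous_on {0..} (D j)"
  shows "pairwise_asymp_indep d (archimedean_copula d \<phi>) \<and>
         mutual_asymp_indep d (archimedean_copula d \<phi>)"
proof -
  interpret arch d \<phi> D using assms by unfold_locales
  show ?thesis using pairwise mutual by simp
qed

end
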